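(* Let $r\ge2$ be an integer. Let $E$ be the set of $\psi\in C_p(\mathbb{R})$ for which there exist constants $m>0$ and $\alpha\ge0$ with $2mr>\alpha$ such that $m\,d(x)\le\psi(x)$ for all $x\in[0,1]$ and $\Delta_{n,k}(y;\psi)\le\alpha$ for all $n\in\mathbb{N}_0$, $k\in\{0,1,\dots,r^n-1\}$, $y\in(0,1)$. Then $E$ contains (1) the set $SC_0$ of all $\psi\in C_p(\mathbb{R})$ that are concave on $[0,1]$ and satisfy $\psi>0$ on $(0,1)$, and (2) the set $\mathcal{P}$.
   Context: $C_p(\mathbb{R})$ denotes the set of all continuous functions $f:\mathbb{R}\to\mathbb{R}$ periodic with period $1$ with $f(0)=0$; $\mathbb{N}_0=\mathbb{N}\cup\{0\}$. $d(x)=\min\{|x-z|:z\in\mathbb{Z}\}$. For $f\in C_p(\mathbb{R})$ and $(n,k,y)\in\mathbb{N}_0\times\mathbb{Z}\times(0,1)$: $\delta^+_{n,k}(y;f)=\dfrac{f(\frac{k+1}{r^n})-f(\frac{k+y}{r^n})}{\frac{1-y}{r^n}}$, $\delta^-_{n,k}(y;f)=\dfrac{f(\frac{k+y}{r^n})-f(\frac{k}{r^n})}{\frac{y}{r^n}}$, $\Delta_{n,k}(y;f)=2r^n(\delta^+_{n,k}(y;f)-\delta^-_{n,k}(y;f))$. For $c>0$, $\mathcal{P}_c$ is the set of $f\in C_p(\mathbb{R})$ with $\delta^+_{n,k}(y;f)-\delta^-_{n,k}(y;f)\le-c$ for all $(n,k,y)\in\mathbb{N}_0\times\mathbb{Z}\times(0,1)$,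 and $\mathcal{P}=\bigcup_{c>0}\mathcal{P}_c$. *)

theory Defs
  imports "HOL-Analysis.Analysis"
begin

definition Cp :: "(real \<Rightarrow> real) set" where
  "Cp = {f. continuous_on UNIV f \<and> (\<forall>x. f (x + 1) = f x) \<and> f 0 = 0}"

definition dZ :: "real \<Rightarrow> real" where
  "dZ x = Inf {\<bar>x - real_of_int z\<bar> | z. True}"

definition delta_plus :: "nat \<Rightarrow> nat \<Rightarrow> int \<Rightarrow> real \<Rightarrow> (real \<Rightarrow> real) \<Rightarrow> real" where
  "delta_plus r n k y f =
     (f ((real_of_int k + 1) / real r ^ n) - f ((real_of_int k + y) / real r ^ n)) / ((1 - y) / real r ^ n)"

definition delta_minus :: "nat \<Rightarrow> nat \<Rightarrow> int \<Rightarrow> real \<Rightarrow> (real \<Rightarrow> real) \<Rightarrow> real" where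
  "delta_minus r n k y f =
     (f ((real_of_int k + y) / real r ^ n) - f (real_of_int k / real r ^ n)) / (y / real r ^ n)"

definition Delta :: "nat \<Rightarrow> nat \<Rightarrow> int \<Rightarrow> real \<Rightarrow> (real \<Rightarrow> real) \<Rightarrow> real" where
  "Delta r n k y f = 2 * real r ^ n * (delta_plus r n k y f - delta_minus r n k y f)"

definition Pc :: "nat \<Rightarrow> real \<Rightarrow> (real \<Rightarrow> real) set" where
  "Pc r c = {f \<in> Cp. \<forall>n k y. 0 < y \<and> y < 1 \<longrightarrow>
       delta_plus r n k y f - delta_minus r n k y f \<le> - c}"

definition Pcal :: "nat \<Rightarrow> (real \<Rightarrow> real) set" where
  "Pcal r = (\<Union>c\<in>{0<..}. Pc r c)"

definition SC0 :: "(real \<Rightarrow> real) set" where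
  "SC0 = {f \<in> Cp. concave_on {0..1} f \<and> (\<forall>x\<in>{0<..<1}. f x > 0)}"

definition Eset :: "nat \<Rightarrow> (real \<Rightarrow> real) set" where
  "Eset r = {psi \<in> Cp. \<exists>m \<alpha>. m > 0 \<and> \<alpha> \<ge> 0 \<and> 2 * m * real r > \<alpha> \<and>
      (\<forall>x\<in>{0..1}. m * dZ x \<le> psi x) \<and>
      (\<forall>n k y. 0 \<le> k \<and> k < int r ^ n \<and> 0 < y \<and> y < 1 \<longrightarrow> Delta r n k y psi \<le> \<alpha>)}"

end

theory Submission
  imports Defs
begin

lemma dZ_le: "dZ x \<le> \<bar>x - real_of_int z\<bar>"
  unfolding dZ_def
  by (rule cInf_lower) (auto intro: bdd_belowI[where m=0])

lemma dZ_le0: "dZ x \<le> \<bar>x\<bar>"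
  using dZ_le[of x 0] by simp

lemma dZ_le1: "dZ x \<le> \<bar>x - 1\<bar>"
  using dZ_le[of x 1] by simp

lemma slope_ineq:
  fixes fa fb fc y s :: real
  assumes y: "0 < y" "y < 1" and s: "s > 0"
    and conc: "fb \<ge> (1 - y) * fa + y * fc"
  shows "(fc - fb) / ((1 - y) / s) \<le> (fb - fa) / (y / s)"
proof -
  have "(fc - fb) / ((1 - y) / s) = s * ((fc - fb) / (1 - y))" using y s by (simp add: field_simps)
  also have "fc - fb \<le> (1 - y) * (fc - fa)" using conc by (simp add: algebra_simps)
  hence "(fc - fb) / (1 - y) \<le> fc - fa"
    using y by (simp add: pos_divide_le_eq mult.commute)
  hence "s * ((fc - fb) / (1 - y)) \<le> s * (fc - fa)" by (rule mult_left_mono) (use s in auto)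
  also have "y * (fc - fa) \<le> fb - fa" using conc by (simp add: algebra_simps)
  hence "fc - fa \<le> (fb - fa) / y"
    using y by (simp add: pos_le_divide_eq mult.commute)
  hence "s * (fc - fa) \<le> s * ((fb - fa) / y)" by (rule mult_left_mono) (use s in auto)
  also have "s * ((fb - fa) / y) = (fb - fa) / (y / s)" using y s by (simp add: field_simps)
  finally show ?thesis .
qed

lemma SC0_part:
  assumes r: "r \<ge> (2::nat)" and f: "f \<in> SC0"
  shows "f \<in> Eset r"
proof -
  have Cp: "f \<in> Cp" and conc: "concave_on {0..1} f" and pos: "\<forall>x\<in>{0<..<1}. f x > 0"
    using f by (auto simp: SC0_def)
  have f0: "f 0 = 0" and f1: "f 1 = 0" using Cp unfolding Cp_def by (auto dest: spec[of _ 0])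
  define m where "m = 2 * f (1/2)"
  have mpos: "m > 0" using pos by (simp add: m_def)
  have lower: "m * dZ x \<le> f x" if x: "x \<in> {0..1}" for x
  proof (cases "x \<le> 1/2")
    case True
    have "f ((1 - 2*x) *\<^sub>R 0 + (2*x) *\<^sub>R (1/2)) \<ge> (1 - 2*x) * f 0 + (2*x) * f (1/2)"
      by (rule concave_onD[OF conc]) (use x True in auto)
    hence "f x \<ge> 2 * x * f (1/2)" using f0 by simp
    moreover have "m * dZ x \<le> m * x" using dZ_le0[of x] x mpos by auto
    ultimately show ?thesis by (simp add: m_def algebra_simps)
  next
    case False
    have "f ((2 - 2*x) *\<^sub>R (1/2) + (2*x - 1) *\<^sub>R 1) \<ge> (2 - 2*x) * f (1/2) + (2*x - 1) * f 1"
      using concave_onD[OF conc, of "2*x - 1" "1/2" 1] x False by (auto simp: algebra_simps)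
    hence "f x \<ge> (2 - 2 * x) * f (1/2)" using f1 by (simp add: algebra_simps)
    moreover have "m * dZ x \<le> m * (1 - x)" using dZ_le1[of x] x mpos by auto
    ultimately show ?thesis by (simp add: m_def algebra_simps)
  qed
  have delta: "Delta r n k y f \<le> 0" if "0 \<le> k" "k < int r ^ n" "0 < y" "y < 1" for n k y
  proof -
    define s where "s = real r ^ n"
    have s: "s > 0" using r by (simp add: s_def)
    have "real_of_int k + 1 \<le> s"
    proof -
      have "k + 1 \<le> int r ^ n" using that by simp
      hence "real_of_int (k + 1) \<le> real_of_int (int r ^ n)" by linarith
      thus ?thesis by (simp add: s_def)
    qed
    hence A: "real_of_int k / s \<in> {0..1}" "(real_of_int k + 1) / s \<in> {0..1}"
      using that s by (auto simp: field_simps)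
    have "f ((1 - y) *\<^sub>R (real_of_int k / s) + y *\<^sub>R ((real_of_int k + 1) / s))
        \<ge> (1 - y) * f (real_of_int k / s) + y * f ((real_of_int k + 1) / s)"
      by (rule concave_onD[OF conc]) (use that A in auto)
    moreover have "(1 - y) *\<^sub>R (real_of_int k / s) + y *\<^sub>R ((real_of_int k + 1) / s)
        = (real_of_int k + y) / s" using s by (simp add: field_simps)
    ultimately have "f ((real_of_int k + y) / s) \<ge> (1 - y) * f (real_of_int k / s) + y * f ((real_of_int k + 1) / s)"
      by simp
    from slope_ineq[OF that(3,4) s this]
    have "delta_plus r n k y f \<le> delta_minus r n k y f"
      by (simp add: delta_plus_def delta_minus_def s_def)
    thus ?thesis unfolding Delta_def by (simp add: mult_nonneg_nonpos)
  qed
  have "\<exists>m \<alpha>. m > 0 \<and> \<alpha> \<ge> 0 \<and> 2 * m * real r > \<alpha> \<and>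
      (\<forall>x\<in>{0..1}. m * dZ x \<le> f x) \<and>
      (\<forall>n k y. 0 \<le> k \<and> k < int r ^ n \<and> 0 < y \<and> y < 1 \<longrightarrow> Delta r n k y f \<le> \<alpha>)"
    using mpos lower delta r by (intro exI[of _ m] exI[of _ 0]) auto
  then show ?thesis using Cp by (simp add: Eset_def)
qed

lemma P_part:
  assumes r: "r \<ge> (2::nat)" and f: "f \<in> Pcal r"
  shows "f \<in> Eset r"
proof -
  obtain c where c: "c > 0" "f \<in> Pc r c" using f by (auto simp: Pcal_def)
  have Cp: "f \<in> Cp" and P: "\<And>n k y. 0 < y \<Longrightarrow> y < 1 \<Longrightarrow>
       delta_plus r n k y f - delta_minus r n k y f \<le> - c"
    using c by (auto simp: Pc_def)
  have f0: "f 0 = 0" and f1: "f 1 = 0" using Cp unfolding Cp_def by (auto dest: spec[of _ 0])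
  have fy: "f y \<ge> c * y * (1 - y)" if y: "0 < y" "y < 1" for y
  proof -
    have "(f 1 - f y) / (1 - y) - (f y - f 0) / y \<le> - c"
      using P[OF y, of 0 0] by (simp add: delta_plus_def delta_minus_def)
    hence "- f y / (1 - y) - f y / y \<le> - c" using f0 f1 by simp
    hence "- f y * y - f y * (1 - y) \<le> - c * (y * (1 - y))"
      using y by (simp add: field_simps)
    thus ?thesis by (simp add: algebra_simps)
  qed
  define m where "m = c / 2"
  have mpos: "m > 0" using c by (simp add: m_def)
  have lower: "m * dZ x \<le> f x" if x: "x \<in> {0..1}" for x
  proof (cases "x = 0 \<or> x = 1")
    case True
    then show ?thesis using f0 f1 dZ_le0[of 0] dZ_le1[of 1] mpos
      by (auto simp: mult_nonneg_nonpos)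
  next
    case False
    hence y: "0 < x" "x < 1" using x by auto
    show ?thesis
    proof (cases "x \<le> 1/2")
      case True
      have "m * dZ x \<le> m * x" using dZ_le0[of x] y mpos by auto
      also have "\<dots> = c * x * (1/2)" by (simp add: m_def)
      also have "\<dots> \<le> c * x * (1 - x)" by (rule mult_left_mono) (use True y c in auto)
      finally show ?thesis using fy[OF y] by linarith
    next
      case False
      have "m * dZ x \<le> m * (1 - x)" using dZ_le1[of x] y mpos by auto
      also have "\<dots> = c * (1 - x) * (1/2)" by (simp add: m_def)
      also have "\<dots> \<le> c * (1 - x) * x" by (rule mult_left_mono) (use False y c in auto)
      also have "\<dots> = c * x * (1 - x)" by simp
      finally show ?thesis using fy[OF y] by linarith
    qed
  qed
  have delta: "Delta r n k y f \<le> 0" if "0 < y" "y < 1" for n k y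
    using P[OF that, of n k] c r unfolding Delta_def
    by (simp add: mult_nonneg_nonpos)
  have "\<exists>m \<alpha>. m > 0 \<and> \<alpha> \<ge> 0 \<and> 2 * m * real r > \<alpha> \<and>
      (\<forall>x\<in>{0..1}. m * dZ x \<le> f x) \<and>
      (\<forall>n k y. 0 \<le> k \<and> k < int r ^ n \<and> 0 < y \<and> y < 1 \<longrightarrow> Delta r n k y f \<le> \<alpha>)"
    using mpos lower delta r by (intro exI[of _ m] exI[of _ 0]) auto
  then show ?thesis using Cp by (simp add: Eset_def)
qed

theorem proposition3p6:
  fixes r :: nat
  assumes "r \<ge> 2"
  shows "SC0 \<subseteq> Eset r \<and> Pcal r \<subseteq> Eset r"
  using SC0_part[OF assms] P_part[OF assms] by blast

end
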